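(* Let $\kappa_3,\kappa_4,q$ be constants and let $y$ be a $C^3$ function on an open interval of $r>0$ on which $\kappa_3r^2+\kappa_4\neq0$. Then $y$ satisfies the third-order equation $$(\kappa_3r^2+\kappa_4)r^3y'''+(\kappa_3r^2-2\kappa_4)r^2y''-(\kappa_3r^2+2\kappa_4)ry'+8\kappa_4y=8-\frac{24q^2}{r^2}$$ if and only if there exists a constant $\kappa_2$ such that $y$ satisfies the second-order equation $$(\kappa_3r^2+\kappa_4)y''+\kappa_3ry'-\frac{2\kappa_4}{r^2}y+\frac{2}{r^2}=2\kappa_2r^2+\frac{4q^2}{r^4}.$$
   Context: Primes denote derivatives with respect to $r$. (In the paper, $y=b^2$ is the metric function of a static spherically symmetric solution of conformal Killing gravity coupled to linear electrodynamics with total charge $q$, $q^2=q_e^2+q_m^2$.) *)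

theory Defs
  imports "HOL-Analysis.Analysis"
begin

end

theory Submission
  imports Defs
begin

lemma Fderiv:
  fixes y y1 y2 y3 :: "real \<Rightarrow> real" and k3 k4 q r :: real
  assumes r: "r > 0"
    and "(y has_real_derivative y1 r) (at r)"
    and "(y1 has_real_derivative y2 r) (at r)"
    and "(y2 has_real_derivative y3 r) (at r)"
  shows "((\<lambda>r. ((k3 * r^2 + k4) * y2 r + k3 * r * y1 r - 2 * k4 / r^2 * y r + 2 / r^2 - 4 * q^2 / r^4) / r^2)
     has_real_derivative
     (((k3 * r^2 + k4) * r^3 * y3 r + (k3 * r^2 - 2 * k4) * r^2 * y2 r
                  - (k3 * r^2 + 2 * k4) * r * y1 r + 8 * k4 * y r) - (8 - 24 * q^2 / r^2)) / r^5) (at r)"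
proof -
  have "((\<lambda>r. ((k3 * r^2 + k4) * y2 r + k3 * r * y1 r - 2 * k4 / r^2 * y r + 2 / r^2 - 4 * q^2 / r^4) / r^2)
     has_real_derivative
     ((((2 * k3 * r) * y2 r + (k3 * r^2 + k4) * y3 r) + (k3 * y1 r + k3 * r * y2 r)
       - ((- (2 * k4) * (2 * r) / (r^2)^2) * y r + 2 * k4 / r^2 * y1 r) + (- 2 * (2 * r) / (r^2)^2)
       - (- (4 * q^2) * (4 * r^3) / (r^4)^2)) * r^2
      - ((k3 * r^2 + k4) * y2 r + k3 * r * y1 r - 2 * k4 / r^2 * y r + 2 / r^2 - 4 * q^2 / r^4) * (2 * r))
     / (r^2)^2) (at r)"
    using r assms(2-4)
    by (auto intro!: derivative_eq_intros simp: power2_eq_square power4_eq_xxxx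
        simp del: power_Suc) (simp add: field_simps power2_eq_square power3_eq_cube)
  moreover have "((((2 * k3 * r) * y2 r + (k3 * r^2 + k4) * y3 r) + (k3 * y1 r + k3 * r * y2 r)
       - ((- (2 * k4) * (2 * r) / (r^2)^2) * y r + 2 * k4 / r^2 * y1 r) + (- 2 * (2 * r) / (r^2)^2)
       - (- (4 * q^2) * (4 * r^3) / (r^4)^2)) * r^2
      - ((k3 * r^2 + k4) * y2 r + k3 * r * y1 r - 2 * k4 / r^2 * y r + 2 / r^2 - 4 * q^2 / r^4) * (2 * r))
     / (r^2)^2 = (((k3 * r^2 + k4) * r^3 * y3 r + (k3 * r^2 - 2 * k4) * r^2 * y2 r
                  - (k3 * r^2 + 2 * k4) * r * y1 r + 8 * k4 * y r) - (8 - 24 * q^2 / r^2)) / r^5"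
    using r by (simp add: field_simps) algebra
  ultimately show ?thesis by simp
qed

theorem proposition12:
  fixes y y1 y2 y3 :: "real \<Rightarrow> real" and I :: "real set" and k3 k4 q :: real
  assumes I_open: "open I" and I_interval: "is_interval I" and I_ne: "I \<noteq> {}"
    and I_pos: "I \<subseteq> {0<..}"
    and I_nz: "\<forall>r\<in>I. k3 * r^2 + k4 \<noteq> 0"
    and d1: "\<forall>r\<in>I. (y has_real_derivative y1 r) (at r)"
    and d2: "\<forall>r\<in>I. (y1 has_real_derivative y2 r) (at r)"
    and d3: "\<forall>r\<in>I. (y2 has_real_derivative y3 r) (at r)"
    and c3: "continuous_on I y3"
  shows "(\<forall>r\<in>I. (k3 * r^2 + k4) * r^3 * y3 r + (k3 * r^2 - 2 * k4) * r^2 * y2 r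
                  - (k3 * r^2 + 2 * k4) * r * y1 r + 8 * k4 * y r = 8 - 24 * q^2 / r^2)
     \<longleftrightarrow> (\<exists>k2. \<forall>r\<in>I. (k3 * r^2 + k4) * y2 r + k3 * r * y1 r - 2 * k4 / r^2 * y r + 2 / r^2
                  = 2 * k2 * r^2 + 4 * q^2 / r^4)"
proof -
  define F where "F = (\<lambda>r. ((k3 * r^2 + k4) * y2 r + k3 * r * y1 r - 2 * k4 / r^2 * y r + 2 / r^2 - 4 * q^2 / r^4) / r^2)"
  define T where "T = (\<lambda>r. ((k3 * r^2 + k4) * r^3 * y3 r + (k3 * r^2 - 2 * k4) * r^2 * y2 r
                  - (k3 * r^2 + 2 * k4) * r * y1 r + 8 * k4 * y r) - (8 - 24 * q^2 / r^2))"
  have D: "(F has_real_derivative T r / r^5) (at r)" if "r \<in> I" for r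
    unfolding F_def T_def using that I_pos d1 d2 d3 by (intro Fderiv) auto
  have eq2: "((k3 * r^2 + k4) * y2 r + k3 * r * y1 r - 2 * k4 / r^2 * y r + 2 / r^2
                  = 2 * k2 * r^2 + 4 * q^2 / r^4) \<longleftrightarrow> F r = 2 * k2" if "r \<in> I" for r k2
  proof -
    have "r > 0" using that I_pos by auto
    then show ?thesis unfolding F_def by (auto simp: field_simps)
  qed
  show ?thesis
  proof
    assume H: "\<forall>r\<in>I. (k3 * r^2 + k4) * r^3 * y3 r + (k3 * r^2 - 2 * k4) * r^2 * y2 r
                  - (k3 * r^2 + 2 * k4) * r * y1 r + 8 * k4 * y r = 8 - 24 * q^2 / r^2"
    have "\<exists>c. \<forall>x\<in>I. F x = c"
    proof (rule has_field_derivative_zero_constant)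
      show "convex I" using I_interval by (simp add: is_interval_convex)
      fix x assume "x \<in> I"
      then have "(F has_real_derivative T x / x^5) (at x)" by (rule D)
      moreover have "T x = 0" using H \<open>x \<in> I\<close> unfolding T_def by auto
      ultimately show "(F has_real_derivative 0) (at x within I)"
        by (auto intro: has_field_derivative_at_within)
    qed
    then obtain c where "\<forall>x\<in>I. F x = c" by blast
    then have "\<forall>r\<in>I. F r = 2 * (c/2)" by auto
    then show "\<exists>k2. \<forall>r\<in>I. (k3 * r^2 + k4) * y2 r + k3 * r * y1 r - 2 * k4 / r^2 * y r + 2 / r^2
                  = 2 * k2 * r^2 + 4 * q^2 / r^4" using eq2 by blast
  next
    assume "\<exists>k2. \<forall>r\<in>I. (k3 * r^2 + k4) * y2 r + k3 * r * y1 r - 2 * k4 / r^2 * y r + 2 / r^2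
                  = 2 * k2 * r^2 + 4 * q^2 / r^4"
    then obtain k2 where "\<forall>r\<in>I. F r = 2 * k2" using eq2 by blast
    show "\<forall>r\<in>I. (k3 * r^2 + k4) * r^3 * y3 r + (k3 * r^2 - 2 * k4) * r^2 * y2 r
                  - (k3 * r^2 + 2 * k4) * r * y1 r + 8 * k4 * y r = 8 - 24 * q^2 / r^2"
    proof
      fix r assume r: "r \<in> I"
      have "r > 0" using r I_pos by auto
      have "(F has_real_derivative 0) (at r)"
        by (rule has_field_derivative_transform_within_open[of "\<lambda>_. 2 * k2" _ _ I])
           (use r I_open \<open>\<forall>r\<in>I. F r = 2 * k2\<close> in auto)
      with D[OF r] have "T r / r^5 = 0" by (rule DERIV_unique)
      then have "T r = 0" using \<open>r > 0\<close> by simp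
      then show "(k3 * r^2 + k4) * r^3 * y3 r + (k3 * r^2 - 2 * k4) * r^2 * y2 r
                  - (k3 * r^2 + 2 * k4) * r * y1 r + 8 * k4 * y r = 8 - 24 * q^2 / r^2"
        unfolding T_def by simp
    qed
  qed
qed

end
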